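(* Let $q\ge2$ be fixed. There is a function $\varepsilon(n)\to0$ as $n\to\infty$ such that every $\mathcal{C}\subseteq\Sigma_q^n$ which is a $2$-read $(n,3)_q$-code, or which is a classical $(n,2;\mathcal{I}_1)_q$-reconstruction code, satisfies $r(\mathcal{C})\ge\log_q\log_q n-\varepsilon(n)$; i.e. $r(\mathcal{C})\ge\log_q\log_q n-o(1)$.
   Context: $\Sigma_q=\{0,\dots,q-1\}$. For $\boldsymbol{x}\in\Sigma_q^n$, $x[i]$ is its $i$-th entry, with $x[i]=0$ for $i\notin[1,n]$. $\mathcal{R}(\boldsymbol{x})$ is the vector of length $n+1$ whose $i$-th entry is the multiset $\{\{x[i-1],x[i]\}\}$. $\mathcal{C}\subseteq\Sigma_q^n$ is a $2$-read $(n,d)_q$-code if $d_H(\mathcal{R}(\boldsymbol{x}),\mathcal{R}(\boldsymbol{y}))\ge d$ for all distinct $\boldsymbol{x},\boldsymbol{y}\in\mathcal{C}$ ($d_H$ = Hamming distance). $\mathcal{I}_1(\boldsymbol{x})$ is the set of sequences of length $n+1$ obtained from $\boldsymbol{x}$ by inserting exactly one symbol of $\Sigma_q$; $\mathcal{C}$ is a classical $(n,2;\mathcal{I}_1)_q$-reconstruction code if $|\mathcal{I}_1(\boldsymbol{x})\cap\mathcal{I}_1(\boldsymbol{y})|\le1$ for all distinct $\boldsymbol{x},\boldsymbol{y}\in\mathcal{C}$. Redundancy: $r(\mathcal{C})=n-\log_q|\mathcal{C}|$. *)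

theory Defs
  imports Complex_Main "HOL-Library.Multiset"
begin

definition seqs :: "nat \<Rightarrow> nat \<Rightarrow> nat list set" where
  "seqs q n = {x. length x = n \<and> set x \<subseteq> {..<q}}"

text \<open>1-indexed entry x[i], equal to 0 outside [1,n].\<close>
definition entry :: "nat list \<Rightarrow> nat \<Rightarrow> nat" where
  "entry x i = (if 1 \<le> i \<and> i \<le> length x then x ! (i - 1) else 0)"

definition read2 :: "nat list \<Rightarrow> nat multiset list" where
  "read2 x = map (\<lambda>i. {# entry x (i - 1), entry x i #}) [1..<length x + 2]"

definition hamming :: "'a list \<Rightarrow> 'a list \<Rightarrow> nat" where
  "hamming u v = card {i. i < length u \<and> u ! i \<noteq> v ! i}"

definition two_read_code :: "nat \<Rightarrow> nat \<Rightarrow> nat \<Rightarrow> nat list set \<Rightarrow> bool" where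
  "two_read_code q n d C \<longleftrightarrow> C \<subseteq> seqs q n \<and>
     (\<forall>x\<in>C. \<forall>y\<in>C. x \<noteq> y \<longrightarrow> hamming (read2 x) (read2 y) \<ge> d)"

definition ins1 :: "nat \<Rightarrow> nat list \<Rightarrow> nat list set" where
  "ins1 q x = {take i x @ a # drop i x | i a. i \<le> length x \<and> a < q}"

definition recon_code :: "nat \<Rightarrow> nat \<Rightarrow> nat list set \<Rightarrow> bool" where
  "recon_code q n C \<longleftrightarrow> C \<subseteq> seqs q n \<and>
     (\<forall>x\<in>C. \<forall>y\<in>C. x \<noteq> y \<longrightarrow> card (ins1 q x \<inter> ins1 q y) \<le> 1)"

definition redundancy :: "nat \<Rightarrow> nat \<Rightarrow> nat list set \<Rightarrow> real" where
  "redundancy q n C = real n - log (real q) (real (card C))"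

end

theory Submission
  imports Defs "HOL-Real_Asymp.Real_Asymp"
begin


definition alt :: "nat \<Rightarrow> nat \<Rightarrow> nat list" where
  "alt a k = map (\<lambda>i. (a + i) mod 2) [0..<k]"

lemma length_alt[simp]: "length (alt a k) = k"
  by (simp add: alt_def)

lemma nth_alt[simp]: "i < k \<Longrightarrow> alt a k ! i = (a + i) mod 2"
  by (simp add: alt_def)

lemma set_alt: "set (alt a k) \<subseteq> {..<2}"
  by (auto simp: alt_def)

lemma alt_add: "alt a (j + k) = alt a j @ alt (a + j) k"
  by (rule nth_equalityI) (auto simp: nth_append add.assoc)

lemma alt_mod: "alt (a + 2) k = alt a k"
  by (rule nth_equalityI) auto

lemma alt_Suc_left: "alt a (Suc k) = a mod 2 # alt (Suc a) k"
  using alt_add[of a 1 k] by (simp add: alt_def)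

lemma alt_Suc_right: "alt a (Suc k) = alt a k @ [(a + k) mod 2]"
  using alt_add[of a k 1] by (simp add: alt_def)

lemma finite_ins1: "finite (ins1 q x)"
proof -
  have "ins1 q x = (\<lambda>(i, a). take i x @ a # drop i x) ` ({..length x} \<times> {..<q})"
    unfolding ins1_def by auto
  then show ?thesis by simp
qed

lemma bp_ins:
  assumes "q \<ge> 2"
  shows "2 \<le> card (ins1 q (u @ alt a k @ v) \<inter> ins1 q (u @ alt (Suc a) k @ v))"
proof -
  let ?x = "u @ alt a k @ v" and ?y = "u @ alt (Suc a) k @ v"
  define z1 where "z1 = u @ alt a (Suc k) @ v"
  define z2 where "z2 = u @ alt (Suc a) (Suc k) @ v"
  have m2: "c mod 2 < q" for c :: nat using assms by linarith
  have "z1 \<in> ins1 q ?x"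
    unfolding ins1_def z1_def alt_Suc_right
    by (rule CollectI, rule exI[of _ "length u + k"], rule exI[of _ "(a+k) mod 2"]) (simp add: m2)
  moreover have "z1 \<in> ins1 q ?y"
    unfolding ins1_def z1_def alt_Suc_left
    by (rule CollectI, rule exI[of _ "length u"], rule exI[of _ "a mod 2"]) (simp add: m2)
  moreover have "z2 \<in> ins1 q ?y"
    unfolding ins1_def z2_def alt_Suc_right
    by (rule CollectI, rule exI[of _ "length u + k"], rule exI[of _ "(Suc a+k) mod 2"]) (simp add: m2)
  moreover have "z2 \<in> ins1 q ?x"
  proof -
    have "z2 = u @ (Suc a mod 2) # alt a k @ v"
      unfolding z2_def alt_Suc_left using alt_mod[of a k] by simp
    then show ?thesis
      unfolding ins1_def
      by (intro CollectI exI[of _ "length u"] exI[of _ "Suc a mod 2"]) (simp add: m2)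
  qed
  moreover have "z1 \<noteq> z2"
  proof
    assume "z1 = z2"
    then have "z1 ! length u = z2 ! length u" by simp
    then show False unfolding z1_def z2_def alt_Suc_left by (simp add: nth_append) presburger
  qed
  ultimately have "{z1, z2} \<subseteq> ins1 q ?x \<inter> ins1 q ?y" "card {z1,z2} = 2" by auto
  then show ?thesis using card_mono[OF finite_Int[OF disjI1[OF finite_ins1]]] by metis
qed

lemma length_read2: "length (read2 z) = length z + 1"
  unfolding read2_def length_map length_upt by simp

lemma bp_ham:
  assumes x: "x = u @ alt a k @ v" and y: "y = u @ alt (Suc a) k @ v"
  shows "hamming (read2 x) (read2 y) \<le> 2"
proof -
  have lxy: "length y = length x" using x y by simp
  have r: "read2 z ! i = {# entry z i, entry z (Suc i) #}" if "i < length z + 1" for z i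
    using that unfolding read2_def by (simp del: upt_Suc)
  have E1: "entry x j = entry y j" if "j \<le> length u" for j
    using that unfolding x y entry_def by (auto simp: nth_append)
  have E2: "entry x j = entry y j" if "j > length u + k" for j
    using that unfolding x y entry_def by (auto simp: nth_append)
  have E3: "entry x j = (a + (j - 1 - length u)) mod 2 \<and> entry y j = (Suc a + (j - 1 - length u)) mod 2"
    if "length u < j" "j \<le> length u + k" for j
    using that unfolding x y entry_def by (auto simp: nth_append)
  have sub: "{i. i < length (read2 x) \<and> read2 x ! i \<noteq> read2 y ! i} \<subseteq> {length u, length u + k}"
  proof
    fix i assume "i \<in> {i. i < length (read2 x) \<and> read2 x ! i \<noteq> read2 y ! i}"
    then have i0: "i < length (read2 x)" and ne: "read2 x ! i \<noteq> read2 y ! i"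
      by blast+
    then have i: "i < length x + 1" unfolding length_read2 by blast
    have ne2: "{# entry x i, entry x (Suc i) #} \<noteq> {# entry y i, entry y (Suc i) #}"
      using ne r[of i x] r[of i y] i lxy by simp
    show "i \<in> {length u, length u + k}"
    proof (rule ccontr)
      assume nin: "i \<notin> {length u, length u + k}"
      consider "i < length u" | "length u < i \<and> i < length u + k" | "i > length u + k"
        using nin by force
      then show False
      proof cases
        case 1 then show ?thesis using ne2 E1[of i] E1[of "Suc i"] by simp
      next
        case 3 then show ?thesis using ne2 E2[of i] E2[of "Suc i"] by simp
      next
        case 2
        then have e: "entry x i = (a + (i - 1 - length u)) mod 2" "entry y i = (Suc a + (i - 1 - length u)) mod 2"
          "entry x (Suc i) = (a + (Suc i - 1 - length u)) mod 2" "entry y (Suc i) = (Suc a + (Suc i - 1 - length u)) mod 2"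
          using E3[of i] E3[of "Suc i"] by auto
        have "Suc i - 1 - length u = Suc (i - 1 - length u)" using 2 by linarith
        moreover have "(a + Suc t) mod 2 = (Suc a + t) mod 2" "(Suc a + Suc t) mod 2 = (a + t) mod 2" for t :: nat
          by simp_all
        ultimately have "entry x (Suc i) = entry y i" "entry y (Suc i) = entry x i"
          using e by metis+
        then show ?thesis using ne2 by (metis add_mset_commute)
      qed
    qed
  qed
  have "hamming (read2 x) (read2 y) \<le> card {length u, length u + k}"
    unfolding hamming_def by (rule card_mono[OF _ sub]) simp
  also have "\<dots> \<le> 2" by (simp add: card_insert_le_m1)
  finally show ?thesis .
qed



definition good :: "nat list set \<Rightarrow> bool" where
  "good C \<longleftrightarrow> (\<forall>x\<in>C. \<forall>y\<in>C. \<forall>u v a k. 1 \<le> k \<longrightarrow> x = u @ alt a k @ v \<longrightarrow> y \<noteq> u @ alt (Suc a) k @ v)"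

lemma alt_ne: "1 \<le> k \<Longrightarrow> u @ alt a k @ v \<noteq> u @ alt (Suc a) k @ v"
proof
  assume "1 \<le> k" "u @ alt a k @ v = u @ alt (Suc a) k @ v"
  then have "alt a k ! 0 = alt (Suc a) k ! 0" by simp
  with \<open>1 \<le> k\<close> show False by simp presburger
qed

lemma good_two_read: "two_read_code q n 3 C \<Longrightarrow> good C"
  unfolding good_def two_read_code_def
proof (intro ballI allI impI)
  fix x y u v a k
  assume H: "C \<subseteq> seqs q n \<and> (\<forall>x\<in>C. \<forall>y\<in>C. x \<noteq> y \<longrightarrow> 3 \<le> hamming (read2 x) (read2 y))"
    "x \<in> C" "y \<in> C" "1 \<le> k" "x = u @ alt a k @ v"
  show "y \<noteq> u @ alt (Suc a) k @ v"
  proof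
    assume y: "y = u @ alt (Suc a) k @ v"
    then have "x \<noteq> y" using H alt_ne by blast
    then have "3 \<le> hamming (read2 x) (read2 y)" using H by blast
    moreover have "hamming (read2 x) (read2 y) \<le> 2" using bp_ham[OF H(5) y] .
    ultimately show False by simp
  qed
qed

lemma good_recon: "q \<ge> 2 \<Longrightarrow> recon_code q n C \<Longrightarrow> good C"
  unfolding good_def recon_code_def
proof (intro ballI allI impI)
  fix x y u v a k
  assume q: "q \<ge> 2" and H: "C \<subseteq> seqs q n \<and> (\<forall>x\<in>C. \<forall>y\<in>C. x \<noteq> y \<longrightarrow> card (ins1 q x \<inter> ins1 q y) \<le> 1)"
    "x \<in> C" "y \<in> C" "1 \<le> k" "x = u @ alt a k @ v"
  show "y \<noteq> u @ alt (Suc a) k @ v"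
  proof
    assume y: "y = u @ alt (Suc a) k @ v"
    then have "x \<noteq> y" using H alt_ne by blast
    then have "card (ins1 q x \<inter> ins1 q y) \<le> 1" using H by blast
    moreover have "2 \<le> card (ins1 q x \<inter> ins1 q y)" using bp_ins[OF q, of u a k v] H(5) y by simp
    ultimately show False by simp
  qed
qed

definition zw :: "nat \<Rightarrow> nat \<Rightarrow> nat list" where
  "zw L j = alt 1 j @ alt j (L - j)"

lemma length_zw[simp]: "j \<le> L \<Longrightarrow> length (zw L j) = L"
  by (simp add: zw_def)

lemma zw_split: assumes "j < k" "k \<le> L"
  shows "zw L j = alt 1 j @ alt j (k - j) @ alt k (L - k)"
    "zw L k = alt 1 j @ alt (Suc j) (k - j) @ alt k (L - k)"
proof -
  have "L - j = (k - j) + (L - k)" using assms by simp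
  then show "zw L j = alt 1 j @ alt j (k - j) @ alt k (L - k)"
    unfolding zw_def using alt_add[of j "k - j" "L - k"] assms by simp
  have "k = j + (k - j)" using assms by simp
  then have "alt 1 k = alt 1 j @ alt (Suc j) (k - j)"
    using alt_add[of 1 j "k - j"] by (metis plus_1_eq_Suc)
  then show "zw L k = alt 1 j @ alt (Suc j) (k - j) @ alt k (L - k)"
    unfolding zw_def by simp
qed

lemma zw_inj: assumes "j \<le> L" "k \<le> L" "zw L j = zw L k" shows "j = k"
proof (rule ccontr)
  assume "j \<noteq> k"
  then consider "j < k" | "k < j" by linarith
  then show False
  proof cases
    case 1
    have "zw L j ! j = j mod 2" using 1 assms(2) zw_split(1)[OF 1 assms(2)] by (simp add: nth_append)
    moreover have "zw L k ! j = Suc j mod 2" using 1 zw_split(2)[OF 1 assms(2)] by (simp add: nth_append)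
    ultimately show False using assms by simp presburger
  next
    case 2
    have "zw L k ! k = k mod 2" using 2 assms(1) zw_split(1)[OF 2 assms(1)] by (simp add: nth_append)
    moreover have "zw L j ! k = Suc k mod 2" using 2 zw_split(2)[OF 2 assms(1)] by (simp add: nth_append)
    ultimately show False using assms by simp presburger
  qed
qed

lemma good_zw:
  assumes "good C" "x \<in> C" "y \<in> C" "x = u @ zw L j @ v" "y = u @ zw L k @ v" "j \<le> L" "k \<le> L"
  shows "j = k"
proof (rule ccontr)
  assume "j \<noteq> k"
  then consider "j < k" | "k < j" by linarith
  then show False
  proof cases
    case 1
    have "x = (u @ alt 1 j) @ alt j (k - j) @ (alt k (L - k) @ v)"
      "y = (u @ alt 1 j) @ alt (Suc j) (k - j) @ (alt k (L - k) @ v)"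
      using assms zw_split[OF 1 assms(7)] by simp_all
    then show False using assms(1,2,3) 1 unfolding good_def by (metis Suc_leI zero_less_diff One_nat_def Suc_le_eq)
  next
    case 2
    have "y = (u @ alt 1 k) @ alt k (j - k) @ (alt j (L - j) @ v)"
      "x = (u @ alt 1 k) @ alt (Suc k) (j - k) @ (alt j (L - j) @ v)"
      using assms zw_split[OF 2 assms(6)] by simp_all
    then show False using assms(1,2,3) 2 unfolding good_def by (metis One_nat_def Suc_le_eq zero_less_diff)
  qed
qed

lemma zw_seqs: "j \<le> L \<Longrightarrow> q \<ge> 2 \<Longrightarrow> zw L j \<in> seqs q L"
  unfolding seqs_def zw_def using set_alt by fastforce



locale blocks =
  fixes q n L :: nat and C :: "nat list set"
  assumes q2: "q \<ge> 2" and L1: "L \<ge> 1" and Cs: "C \<subseteq> seqs q n" and gd: "good C"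
begin

definition m where "m = n div L"
definition W where "W = zw L ` {..L}"
definition blk :: "nat list \<Rightarrow> nat \<Rightarrow> nat list" where "blk x i = take L (drop (i*L) x)"
definition repl :: "nat list \<Rightarrow> nat \<Rightarrow> nat list \<Rightarrow> nat list" where
  "repl x i w = take (i*L) x @ w @ drop (i*L+L) x"

lemma iL: "i < m \<Longrightarrow> i*L + L \<le> n"
proof -
  assume "i < m"
  then have "(i+1)*L \<le> m*L" by (intro mult_le_mono1) simp
  also have "m*L \<le> n" unfolding m_def by simp
  finally show ?thesis by simp
qed

lemma length_repl[simp]: "length x = n \<Longrightarrow> i < m \<Longrightarrow> length w = L \<Longrightarrow> length (repl x i w) = n"
  using iL[of i] unfolding repl_def by simp

lemma nth_repl: "length x = n \<Longrightarrow> i < m \<Longrightarrow> length w = L \<Longrightarrow> p < n \<Longrightarrow>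
  repl x i w ! p = (if p < i*L then x!p else if p < i*L+L then w!(p - i*L) else x!p)"
  using iL[of i] unfolding repl_def by (auto simp: nth_append)

lemma length_blk[simp]: "length x = n \<Longrightarrow> i < m \<Longrightarrow> length (blk x i) = L"
  using iL[of i] unfolding blk_def by simp

lemma nth_blk: "length x = n \<Longrightarrow> i < m \<Longrightarrow> t < L \<Longrightarrow> blk x i ! t = x ! (i*L + t)"
  using iL[of i] unfolding blk_def by simp

lemma blk_repl_same: "length x = n \<Longrightarrow> i < m \<Longrightarrow> length w = L \<Longrightarrow> blk (repl x i w) i = w"
proof (rule nth_equalityI)
  assume a: "length x = n" "i < m" "length w = L"
  show "length (blk (repl x i w) i) = length w" using a by simp
  fix t assume "t < length (blk (repl x i w) i)"
  then have t: "t < L" using a by simp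
  have "i*L + t < n" using iL[OF a(2)] t by simp
  then show "blk (repl x i w) i ! t = w ! t" using a t by (simp add: nth_blk nth_repl)
qed

lemma blk_repl_other: "length x = n \<Longrightarrow> i < m \<Longrightarrow> length w = L \<Longrightarrow> j < m \<Longrightarrow> j \<noteq> i \<Longrightarrow>
   blk (repl x i w) j = blk x j"
proof (rule nth_equalityI)
  assume a: "length x = n" "i < m" "length w = L" "j < m" "j \<noteq> i"
  show "length (blk (repl x i w) j) = length (blk x j)" using a by simp
  fix t assume "t < length (blk (repl x i w) j)"
  then have t: "t < L" using a by simp
  have jn: "j*L + t < n" using iL[OF a(4)] t by simp
  have "j*L + t < i*L \<or> j*L + t \<ge> i*L + L"
  proof (cases "j < i")
    case True
    then have "(j+1)*L \<le> i*L" by (intro mult_le_mono1) simp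
    then show ?thesis using t by simp
  next
    case False
    then have "(i+1)*L \<le> j*L" using a by (intro mult_le_mono1) simp
    then show ?thesis by simp
  qed
  then show "blk (repl x i w) j ! t = blk x j ! t"
    using a t jn by (auto simp: nth_blk nth_repl)
qed

lemma repl_repl: "length x = n \<Longrightarrow> i < m \<Longrightarrow> length w = L \<Longrightarrow> length w' = L \<Longrightarrow>
   repl (repl x i w) i w' = repl x i w'"
  by (rule nth_equalityI) (auto simp: nth_repl)

lemma repl_blk: "length x = n \<Longrightarrow> i < m \<Longrightarrow> repl x i (blk x i) = x"
  by (rule nth_equalityI) (auto simp: nth_repl nth_blk dest: iL)

lemma repl_seqs: "x \<in> seqs q n \<Longrightarrow> i < m \<Longrightarrow> w \<in> seqs q L \<Longrightarrow> repl x i w \<in> seqs q n"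
  unfolding seqs_def repl_def using iL[of i]
  by (auto dest: in_set_takeD in_set_dropD)

lemma blk_seqs: "x \<in> seqs q n \<Longrightarrow> i < m \<Longrightarrow> blk x i \<in> seqs q L"
  unfolding seqs_def blk_def using iL[of i]
  by (auto dest: in_set_takeD in_set_dropD)

lemma W_seqs: "W \<subseteq> seqs q L"
  unfolding W_def using zw_seqs q2 by auto

lemma card_W: "card W = L + 1"
proof -
  have "inj_on (zw L) {..L}" by (auto intro!: inj_onI zw_inj)
  then show ?thesis unfolding W_def by (simp add: card_image)
qed

lemma finite_seqs: "finite (seqs q k)"
proof -
  have "seqs q k = {xs. set xs \<subseteq> {..<q} \<and> length xs = k}" unfolding seqs_def by auto
  then show ?thesis using finite_lists_length_eq[of "{..<q}" k] by simp
qed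

lemma card_seqs: "card (seqs q k) = q ^ k"
proof -
  have "seqs q k = {xs. set xs \<subseteq> {..<q} \<and> length xs = k}" unfolding seqs_def by auto
  then show ?thesis using card_lists_length_eq[of "{..<q}" k] by simp
qed

end


context blocks begin

definition F where "F x \<longleftrightarrow> (\<exists>i<m. blk x i \<in> W)"
definition fw where "fw x = (LEAST i. i < m \<and> blk x i \<in> W)"

lemma fw: "F x \<Longrightarrow> fw x < m \<and> blk x (fw x) \<in> W"
  unfolding F_def fw_def using LeastI_ex[of "\<lambda>i. i < m \<and> blk x i \<in> W"] by blast

lemma fw_min: assumes "F x" "j < fw x" shows "blk x j \<notin> W"
proof -
  have "j < m" using fw[OF assms(1)] assms(2) by simp
  moreover have "\<not> (j < m \<and> blk x j \<in> W)"
    using assms(2) unfolding fw_def by (rule not_less_Least)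
  ultimately show ?thesis by simp
qed

lemma W_len: "w \<in> W \<Longrightarrow> length w = L"
  unfolding W_def by auto

lemma fw_repl:
  assumes x: "length x = n" "F x" and w: "w \<in> W"
  shows "F (repl x (fw x) w) \<and> fw (repl x (fw x) w) = fw x"
proof -
  define i where "i = fw x"
  let ?i = i
  have i: "?i < m" "blk x ?i \<in> W" using fw[OF x(2)] i_def by auto
  have lw: "length w = L" using W_len[OF w] .
  have b: "blk (repl x ?i w) ?i = w" using blk_repl_same[OF x(1) i(1) lw] .
  have F: "F (repl x ?i w)" unfolding F_def using i b w by auto
  have "fw (repl x ?i w) = ?i"
    unfolding fw_def[of "repl x i w"]
  proof (rule Least_equality)
    show "?i < m \<and> blk (repl x ?i w) ?i \<in> W" using i b w by simp
    fix j assume j: "j < m \<and> blk (repl x ?i w) j \<in> W"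
    show "?i \<le> j"
    proof (rule ccontr)
      assume "\<not> ?i \<le> j"
      then have "j < ?i" by simp
      then have "blk (repl x ?i w) j = blk x j" using blk_repl_other[OF x(1) i(1) lw] j by simp
      then show False using fw_min[of x j] x(2) \<open>j < ?i\<close> j i_def by simp
    qed
  qed
  then show ?thesis using F i_def by simp
qed

definition z0 where "z0 = zw L 0"
lemma z0W: "z0 \<in> W" unfolding z0_def W_def by simp

definition phi where "phi x = (if F x then repl x (fw x) z0 else x)"

lemma seqs_len: "x \<in> seqs q k \<Longrightarrow> length x = k" unfolding seqs_def by simp

lemma W_zw: "w \<in> W \<Longrightarrow> \<exists>j\<le>L. w = zw L j" unfolding W_def by auto

lemma phi_inj: "inj_on phi C"
proof (rule inj_onI)
  fix x y assume xC: "x \<in> C" and yC: "y \<in> C" and e: "phi x = phi y"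
  have lx: "length x = n" and ly: "length y = n" using xC yC Cs seqs_len by auto
  have lz: "length z0 = L" using W_len[OF z0W] .
  consider "F x" "F y" | "F x" "\<not> F y" | "\<not> F x" "F y" | "\<not> F x" "\<not> F y" by blast
  then show "x = y"
  proof cases
    case 1
    have "fw x = fw (phi x)" using fw_repl[OF lx 1(1) z0W] 1 unfolding phi_def by simp
    also have "\<dots> = fw (phi y)" using e by simp
    also have "\<dots> = fw y" using fw_repl[OF ly 1(2) z0W] 1 unfolding phi_def by simp
    finally have "fw x = fw y" .
    define i where "i = fw x"
    have i: "i < m" "blk x i \<in> W" "blk y i \<in> W" using fw[OF 1(1)] fw[OF 1(2)] \<open>fw x = fw y\<close> i_def by auto
    have e2: "repl x i z0 = repl y i z0" using e 1 \<open>fw x = fw y\<close> unfolding phi_def i_def by simp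
    have lbx: "length (blk x i) = L" using lx i by simp
    have "x = repl (repl x i z0) i (blk x i)" using repl_repl[OF lx i(1) lz lbx] repl_blk[OF lx i(1)] by simp
    also have "\<dots> = repl y i (blk x i)" using e2 repl_repl[OF ly i(1) lz lbx] by simp
    finally have xr: "x = take (i*L) y @ blk x i @ drop (i*L+L) y" unfolding repl_def .
    have yr: "y = take (i*L) y @ blk y i @ drop (i*L+L) y" using repl_blk[OF ly i(1)] unfolding repl_def by simp
    obtain j k where j: "j \<le> L" "blk x i = zw L j" and k: "k \<le> L" "blk y i = zw L k"
      using W_zw i by blast
    have "j = k" by (rule good_zw[OF gd xC yC _ _ j(1) k(1)]) (use xr yr j k in simp_all)
    then have "blk x i = blk y i" using j k by simp
    then show ?thesis using xr yr by simp
  next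
    case 2
    then have "F (phi x)" "\<not> F (phi y)" using fw_repl[OF lx 2(1) z0W] unfolding phi_def by auto
    then show ?thesis using e by simp
  next
    case 3
    then have "F (phi y)" "\<not> F (phi x)" using fw_repl[OF ly 3(2) z0W] unfolding phi_def by auto
    then show ?thesis using e by simp
  next
    case 4
    then show ?thesis using e by (simp add: phi_def)
  qed
qed

definition N0 where "N0 = {x \<in> seqs q n. \<not> F x}"
definition Im2 where "Im2 = {y \<in> seqs q n. F y \<and> blk y (fw y) = z0}"

lemma phi_img: "phi ` C \<subseteq> N0 \<union> Im2"
proof
  fix y assume "y \<in> phi ` C"
  then obtain x where xC: "x \<in> C" and y: "y = phi x" by blast
  have xs: "x \<in> seqs q n" using xC Cs by auto
  then have lx: "length x = n" by (rule seqs_len)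
  show "y \<in> N0 \<union> Im2"
  proof (cases "F x")
    case True
    have i: "fw x < m" using fw[OF True] by simp
    have "repl x (fw x) z0 \<in> seqs q n" using repl_seqs[OF xs i] z0W W_seqs by auto
    moreover have "blk (repl x (fw x) z0) (fw x) = z0" using blk_repl_same[OF lx i] W_len[OF z0W] by simp
    ultimately have "y \<in> Im2" using fw_repl[OF lx True z0W] y True unfolding phi_def Im2_def by simp
    then show ?thesis by simp
  next
    case False
    then show ?thesis using y xs unfolding phi_def N0_def by simp
  qed
qed

lemma card_C: "card C \<le> card N0 + card Im2"
proof -
  have "card C = card (phi ` C)" using phi_inj by (simp add: card_image)
  also have "\<dots> \<le> card (N0 \<union> Im2)"
    by (rule card_mono[OF _ phi_img]) (auto simp: N0_def Im2_def intro: finite_subset[OF _ finite_seqs[of n]])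
  also have "\<dots> \<le> card N0 + card Im2" by (rule card_Un_le)
  finally show ?thesis .
qed

lemma card_Im2: "card Im2 * (L + 1) \<le> q ^ n"
proof -
  define psi where "psi = (\<lambda>(y, w). repl y (fw y) w)"
  have inj: "inj_on psi (Im2 \<times> W)"
  proof (rule inj_onI)
    fix a b assume a: "a \<in> Im2 \<times> W" and b: "b \<in> Im2 \<times> W" and e: "psi a = psi b"
    obtain y w where a': "a = (y, w)" "y \<in> Im2" "w \<in> W" using a by auto
    obtain y' w' where b': "b = (y', w')" "y' \<in> Im2" "w' \<in> W" using b by auto
    have ly: "length y = n" "F y" "blk y (fw y) = z0" using a'(2) unfolding Im2_def by (auto dest: seqs_len)
    have ly': "length y' = n" "F y'" "blk y' (fw y') = z0" using b'(2) unfolding Im2_def by (auto dest: seqs_len)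
    have e': "repl y (fw y) w = repl y' (fw y') w'" using e a' b' unfolding psi_def by simp
    have "fw y = fw (repl y (fw y) w)" using fw_repl[OF ly(1,2) a'(3)] by simp
    also have "\<dots> = fw (repl y' (fw y') w')" using e' by simp
    also have "\<dots> = fw y'" using fw_repl[OF ly'(1,2) b'(3)] by simp
    finally have "fw y = fw y'" .
    define i where "i = fw y"
    have i: "i < m" using fw[OF ly(2)] i_def by simp
    have lw: "length w = L" "length w' = L" using W_len a'(3) b'(3) by auto
    have i': "i < m" using fw[OF ly'(2)] i_def \<open>fw y = fw y'\<close> by simp
    have "w = blk (repl y i w) i" using blk_repl_same[OF ly(1) i lw(1)] by simp
    also have "\<dots> = blk (repl y' i w') i" using e' i_def \<open>fw y = fw y'\<close> by simp
    also have "\<dots> = w'" using blk_repl_same[OF ly'(1) i' lw(2)] by simp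
    finally have "w = w'" .
    have lz: "length z0 = L" using W_len[OF z0W] .
    have "y = repl (repl y i w) i z0" using repl_repl[OF ly(1) i lw(1) lz] repl_blk[OF ly(1) i] ly(3) i_def by simp
    also have "\<dots> = repl (repl y' i w') i z0" using e' i_def \<open>fw y = fw y'\<close> by simp
    also have "\<dots> = y'" using repl_repl[OF ly'(1) i lw(2) lz] repl_blk[OF ly'(1) i] ly'(3) i_def \<open>fw y = fw y'\<close> by simp
    finally show "a = b" using a' b' \<open>w = w'\<close> by simp
  qed
  have img: "psi ` (Im2 \<times> W) \<subseteq> seqs q n"
  proof
    fix z assume "z \<in> psi ` (Im2 \<times> W)"
    then obtain y w where "y \<in> Im2" "w \<in> W" "z = repl y (fw y) w" unfolding psi_def by auto
    then show "z \<in> seqs q n" using repl_seqs fw W_seqs unfolding Im2_def by auto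
  qed
  have fI: "finite Im2" unfolding Im2_def using finite_seqs[of n] by simp
  have fW: "finite W" unfolding W_def by simp
  have "card Im2 * (L + 1) = card (Im2 \<times> W)" using card_W by (simp add: card_cartesian_product)
  also have "\<dots> = card (psi ` (Im2 \<times> W))" using inj by (simp add: card_image)
  also have "\<dots> \<le> card (seqs q n)" by (rule card_mono[OF finite_seqs img])
  finally show ?thesis using card_seqs by simp
qed

end


context blocks begin

definition Nset where "Nset k t = {x \<in> seqs q (k*L+t). \<forall>i<k. blk x i \<notin> W}"

lemma card_Nset: "card (Nset k t) \<le> (q^L - (L+1))^k * q^t"
proof (induction k)
  case 0
  have "Nset 0 t = seqs q t" unfolding Nset_def by simp
  then show ?case using card_seqs by simp
next
  case (Suc k)
  have sub: "Nset (Suc k) t \<subseteq> (\<lambda>(b, x'). b @ x') ` ((seqs q L - W) \<times> Nset k t)"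
  proof
    fix x assume x: "x \<in> Nset (Suc k) t"
    then have xs: "x \<in> seqs q (L + (k*L+t))" and nb: "\<forall>i<Suc k. blk x i \<notin> W"
      unfolding Nset_def by (simp_all add: add.assoc)
    have "take L x \<in> seqs q L" using xs unfolding seqs_def by (auto dest: in_set_takeD)
    moreover have "take L x \<notin> W" using nb[rule_format, of 0] unfolding blk_def by simp
    moreover have "drop L x \<in> seqs q (k*L+t)" using xs unfolding seqs_def by (auto dest: in_set_dropD)
    moreover have "blk (drop L x) i = blk x (Suc i)" for i
      unfolding blk_def by (simp add: add.commute)
    ultimately have "(take L x, drop L x) \<in> (seqs q L - W) \<times> Nset k t"
      using nb unfolding Nset_def by auto
    then show "x \<in> (\<lambda>(b, x'). b @ x') ` ((seqs q L - W) \<times> Nset k t)"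
      by (metis (no_types, lifting) append_take_drop_id case_prod_conv image_eqI)
  qed
  have fN: "finite (Nset k t)" unfolding Nset_def using finite_seqs by simp
  have "card (Nset (Suc k) t) \<le> card ((\<lambda>(b, x'). b @ x') ` ((seqs q L - W) \<times> Nset k t))"
    by (rule card_mono[OF _ sub]) (simp add: finite_seqs fN)
  also have "\<dots> \<le> card ((seqs q L - W) \<times> Nset k t)" by (rule card_image_le) (simp add: finite_seqs fN)
  also have "\<dots> = card (seqs q L - W) * card (Nset k t)" by (simp add: card_cartesian_product)
  also have "card (seqs q L - W) = q^L - (L+1)"
    using card_Diff_subset[OF _ W_seqs] card_W card_seqs unfolding W_def by simp
  also have "(q^L - (L+1)) * card (Nset k t) \<le> (q^L - (L+1)) * ((q^L - (L+1))^k * q^t)"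
    using Suc.IH by simp
  finally show ?case by simp
qed

lemma card_N0: "card N0 \<le> (q^L - (L+1))^m * q^(n mod L)"
proof -
  have "n = m*L + n mod L" unfolding m_def by simp
  then have "N0 = Nset m (n mod L)" unfolding N0_def Nset_def F_def by auto
  then show ?thesis using card_Nset by simp
qed

lemma main_count: "card C * (L + 1) \<le> (L+1) * (q^L - (L+1))^m * q^(n mod L) + q ^ n"
proof -
  have "card C * (L+1) \<le> (card N0 + card Im2) * (L+1)" using card_C by (rule mult_le_mono1)
  also have "\<dots> = card N0 * (L+1) + card Im2 * (L+1)" by (simp add: algebra_simps)
  also have "\<dots> \<le> (q^L - (L+1))^m * q^(n mod L) * (L+1) + q^n"
    using card_N0 card_Im2 by (intro add_mono mult_le_mono1) auto
  finally show ?thesis by (simp add: algebra_simps)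
qed

end


lemma comb: assumes "q \<ge> 2" "L \<ge> 1" "C \<subseteq> seqs q n" "good C"
  shows "card C * (L+1) \<le> (L+1) * (q^L - (L+1))^(n div L) * q^(n mod L) + q^n"
proof -
  interpret blocks q n L C using assms by unfold_locales
  from main_count show ?thesis unfolding m_def .
qed

definition EE :: "real \<Rightarrow> real \<Rightarrow> real" where
  "EE c l = (ln (l / (l - sqrt l)) + ln (1 + (l + 1) * exp (1 - 2 powr sqrt l))) / ln c"

lemma red_nonneg: assumes "q \<ge> 2" "C \<noteq> {}" "C \<subseteq> seqs q n"
  shows "redundancy q n C \<ge> 0"
proof -
  interpret blocks q n 1 "{}" using assms by unfold_locales (auto simp: good_def seqs_def)
  have "card C \<le> card (seqs q n)" by (rule card_mono[OF finite_seqs assms(3)])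
  then have "card C \<le> q ^ n" using card_seqs by simp
  then have "real (card C) \<le> real q ^ n" by (metis of_nat_le_iff of_nat_power)
  moreover have "card C > 0" using assms(2) finite_subset[OF assms(3) finite_seqs] by (simp add: card_gt_0_iff)
  ultimately have "log (real q) (real (card C)) \<le> log (real q) (real q ^ n)"
    using assms(1) by (subst log_le_cancel_iff) auto
  also have "\<dots> = real n" using assms(1) by (simp add: log_nat_power)
  finally show ?thesis unfolding redundancy_def by simp
qed

lemma fin_seqs: "finite (seqs q k)"
proof -
  have "seqs q k = {xs. set xs \<subseteq> {..<q} \<and> length xs = k}" unfolding seqs_def by auto
  then show ?thesis using finite_lists_length_eq[of "{..<q}" k] by simp
qed

lemma main_bound:
  assumes q: "q \<ge> 2" and Cne: "C \<noteq> {}" and Cs: "C \<subseteq> seqs q n" and gd: "good C"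
    and n1: "n \<ge> 1" and cond: "log (real q) (real n) - sqrt (log (real q) (real n)) \<ge> 1"
  shows "redundancy q n C \<ge> log (real q) (log (real q) (real n)) - EE (real q) (log (real q) (real n))"
proof -
  define c where "c = real q"
  define l where "l = log c (real n)"
  have c2: "c \<ge> 2" using q unfolding c_def by simp
  have c1: "c > 1" using c2 by simp
  have lc: "l - sqrt l \<ge> 1" using cond unfolding l_def c_def .
  have lnn: "l \<ge> 0" unfolding l_def using c1 n1 by simp
  have sq0: "sqrt l \<ge> 0" using lnn by simp
  have l0: "l > 0" using lc sq0 by linarith
  have cn: "c powr l = real n" unfolding l_def using c1 n1 by simp
  define L where "L = nat \<lfloor>l - sqrt l\<rfloor>"
  have fl1: "\<lfloor>l - sqrt l\<rfloor> \<ge> 1" using lc by (simp add: le_floor_iff)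
  have Lr: "real L = of_int \<lfloor>l - sqrt l\<rfloor>" unfolding L_def using fl1 by simp
  have hL1: "real L \<le> l - sqrt l" using Lr by simp
  have hL2: "l - sqrt l < real L + 1" using Lr by linarith
  have L1: "L \<ge> 1" unfolding L_def using fl1 by linarith
  define m where "m = n div L"
  define t where "t = n mod L"
  define s where "s = real L + 1"
  define Q where "Q = c ^ L"
  have nat1: "L + 1 \<le> q ^ L"
  proof -
    have "L < 2 ^ L" by (rule less_exp)
    also have "(2::nat) ^ L \<le> q ^ L" using q by (simp add: power_mono)
    finally show ?thesis by simp
  qed
  have hQs: "s \<le> Q" unfolding s_def Q_def c_def using nat1
    by (metis of_nat_1 of_nat_add of_nat_le_iff of_nat_power)
  have s0: "s > 0" unfolding s_def by simp
  have Q0: "Q > 0" using hQs s0 by simp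
  have comb': "card C * (L+1) \<le> (L+1) * (q^L - (L+1))^m * q^t + q^n"
    using comb[OF q L1 Cs gd] unfolding m_def t_def .
  have cast: "real (q^L - (L+1)) = Q - s" unfolding Q_def s_def c_def using nat1 by (simp add: of_nat_diff)
  have hcomb: "real (card C) * s \<le> s * (Q - s)^m * c^t + c^n"
  proof -
    have "real (card C * (L+1)) \<le> real ((L+1) * (q^L - (L+1))^m * q^t + q^n)"
      using comb' by (rule of_nat_mono)
    then show ?thesis unfolding of_nat_add of_nat_mult of_nat_power cast
      by (simp add: s_def c_def)
  qed
  have nmt: "n = L * m + t" unfolding m_def t_def by simp
  have hqn: "c^n = Q^m * c^t" unfolding Q_def by (subst nmt) (simp add: power_add power_mult)
  define \<delta> where "\<delta> = (1 - s / Q) ^ m"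
  have d0: "\<delta> \<ge> 0" unfolding \<delta>_def using hQs Q0 by simp
  have "(Q - s)^m = \<delta> * Q^m"
    unfolding \<delta>_def using Q0 by (simp add: power_mult_distrib[symmetric] field_simps)
  then have "real (card C) * s \<le> c^n * (1 + s * \<delta>)"
    using hcomb hqn by (simp add: algebra_simps)
  then have cardC: "real (card C) \<le> c^n * (1 + s * \<delta>) / s" using s0 by (simp add: field_simps)
  have cpos: "card C > 0" using Cne finite_subset[OF Cs fin_seqs] by (simp add: card_gt_0_iff)
  have d1: "1 + s * \<delta> > 0" using s0 d0 by (simp add: add_pos_nonneg)
  have "log c (real (card C)) \<le> log c (c^n * (1 + s * \<delta>) / s)"
    using cardC cpos c1 d1 s0 by (subst log_le_cancel_iff) auto
  also have "\<dots> = real n + log c (1 + s * \<delta>) - log c s"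
    using c1 d1 s0 by (simp add: log_divide log_mult log_nat_power)
  finally have red1: "redundancy q n C \<ge> log c s - log c (1 + s * \<delta>)"
    unfolding redundancy_def c_def by simp
  have "\<delta> \<le> exp (- s / Q) ^ m"
    unfolding \<delta>_def using hQs Q0 exp_ge_add_one_self[of "- s / Q"]
    by (intro power_mono) (simp_all add: field_simps)
  also have "\<dots> = exp (- (real m * s / Q))" by (simp add: exp_of_nat_mult[symmetric])
  finally have dexp: "\<delta> \<le> exp (- (real m * s / Q))" .
  have tL: "t < L" unfolding t_def using L1 by simp
  have "real m * s \<ge> real n - Q"
  proof -
    have "real n = real L * real m + real t" using nmt by (metis of_nat_add of_nat_mult)
    moreover have "real t < real L" using tL by simp
    moreover have "real L \<le> Q" using hQs unfolding s_def by simp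
    moreover have "real m \<ge> 0" by simp
    ultimately show ?thesis unfolding s_def by (simp add: algebra_simps)
  qed
  then have "(real n - Q) / Q \<le> real m * s / Q" using Q0 by (intro divide_right_mono) auto
  moreover have "(real n - Q) / Q = real n / Q - 1" using Q0 by (simp add: diff_divide_distrib)
  ultimately have ms: "real m * s / Q \<ge> real n / Q - 1" by simp
  have "Q = c powr real L" unfolding Q_def using c1 by (simp add: powr_realpow)
  also have "\<dots> \<le> c powr (l - sqrt l)" using hL1 c1 by (intro powr_mono) auto
  also have "\<dots> = real n / c powr sqrt l" using cn by (simp add: powr_diff)
  finally have "Q \<le> real n / c powr sqrt l" .
  then have "c powr sqrt l \<le> real n / Q" using Q0 c1 by (simp add: field_simps)
  moreover have "2 powr sqrt l \<le> c powr sqrt l" using c2 sq0 by (intro powr_mono2) auto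
  ultimately have "real m * s / Q \<ge> 2 powr sqrt l - 1" using ms by simp
  then have "exp (- (real m * s / Q)) \<le> exp (1 - 2 powr sqrt l)" by simp
  then have "\<delta> \<le> exp (1 - 2 powr sqrt l)" using dexp by linarith
  moreover have "s \<le> l + 1" using hL1 sq0 unfolding s_def by linarith
  ultimately have sd: "s * \<delta> \<le> (l + 1) * exp (1 - 2 powr sqrt l)"
    using d0 s0 by (intro mult_mono) auto
  have "log c (1 + s * \<delta>) \<le> log c (1 + (l + 1) * exp (1 - 2 powr sqrt l))"
    using sd d1 c1 by (subst log_le_cancel_iff) auto
  moreover have "log c s \<ge> log c (l - sqrt l)"
    using hL2 lc c1 by (subst log_le_cancel_iff) (auto simp: s_def)
  ultimately have "redundancy q n C \<ge> log c (l - sqrt l) - log c (1 + (l + 1) * exp (1 - 2 powr sqrt l))"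
    using red1 by simp
  moreover have "log c (l - sqrt l) - log c (1 + (l + 1) * exp (1 - 2 powr sqrt l)) = log c l - EE c l"
  proof -
    have lp: "l - sqrt l > 0" using lc by simp
    have "ln (l / (l - sqrt l)) = ln l - ln (l - sqrt l)" using l0 lp by (simp add: ln_div)
    moreover have "ln c > 0" using c1 by simp
    ultimately show ?thesis unfolding EE_def log_def by (simp add: field_simps)
  qed
  ultimately show ?thesis unfolding c_def l_def by simp
qed

lemma E0: "((\<lambda>l::real. ln (l / (l - sqrt l)) + ln (1 + (l + 1) * exp (1 - 2 powr sqrt l))) \<longlongrightarrow> 0) at_top"
  by real_asymp

lemma E1: "filterlim (\<lambda>l::real. l - sqrt l) at_top at_top"
  by real_asymp

lemma logtop: assumes "c > (1::real)" shows "filterlim (\<lambda>n::nat. log c (real n)) at_top sequentially"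
proof -
  have "filterlim (\<lambda>n::nat. (1 / ln c) * ln (real n)) at_top sequentially"
    by (rule filterlim_tendsto_pos_mult_at_top[OF tendsto_const])
       (use assms in simp, rule filterlim_compose[OF ln_at_top filterlim_real_sequentially])
  then show ?thesis by (simp add: log_def)
qed

theorem theorem5:
  fixes q :: nat
  assumes "q \<ge> 2"
  shows "\<exists>\<epsilon> :: nat \<Rightarrow> real. \<epsilon> \<longlonglongrightarrow> 0 \<and>
    (\<forall>n C. C \<noteq> {} \<and> (two_read_code q n 3 C \<or> recon_code q n C) \<longrightarrow>
       redundancy q n C \<ge> log (real q) (log (real q) (real n)) - \<epsilon> n)"
proof -
  define c where "c = real q"
  have c1: "c > 1" using assms unfolding c_def by simp
  define P where "P n \<longleftrightarrow> n \<ge> 1 \<and> log c (real n) - sqrt (log c (real n)) \<ge> 1" for n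
  define \<epsilon> where "\<epsilon> n = (if P n then EE c (log c (real n)) else log c (log c (real n)))" for n
  have lim1: "((\<lambda>n. EE c (log c (real n))) \<longlongrightarrow> 0) sequentially"
  proof -
    have "((\<lambda>l. EE c l) \<longlongrightarrow> 0 / ln c) at_top"
      unfolding EE_def by (rule tendsto_divide[OF E0 tendsto_const]) (use c1 in simp)
    then have "((\<lambda>l. EE c l) \<longlongrightarrow> 0) at_top" by simp
    then show ?thesis by (rule filterlim_compose[OF _ logtop[OF c1]])
  qed
  have evP: "eventually P sequentially"
  proof -
    have "filterlim (\<lambda>n. log c (real n) - sqrt (log c (real n))) at_top sequentially"
      by (rule filterlim_compose[OF E1 logtop[OF c1]])
    then have "eventually (\<lambda>n. log c (real n) - sqrt (log c (real n)) \<ge> 1) sequentially"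
      by (simp add: filterlim_at_top)
    moreover have "eventually (\<lambda>n. n \<ge> (1::nat)) sequentially" by (rule eventually_ge_at_top)
    ultimately show ?thesis unfolding P_def by eventually_elim auto
  qed
  have "\<epsilon> \<longlonglongrightarrow> 0"
  proof (rule Lim_transform_eventually[OF lim1])
    show "eventually (\<lambda>n. EE c (log c (real n)) = \<epsilon> n) sequentially"
      using evP by eventually_elim (simp add: \<epsilon>_def)
  qed
  moreover have "redundancy q n C \<ge> log (real q) (log (real q) (real n)) - \<epsilon> n"
    if H: "C \<noteq> {} \<and> (two_read_code q n 3 C \<or> recon_code q n C)" for n C
  proof -
    have Cs: "C \<subseteq> seqs q n" using H unfolding two_read_code_def recon_code_def by blast
    have gd: "good C" using H good_two_read good_recon assms by blast
    show ?thesis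
    proof (cases "P n")
      case True
      then show ?thesis using main_bound[OF assms _ Cs gd] H unfolding \<epsilon>_def P_def c_def by simp
    next
      case False
      then show ?thesis using red_nonneg[OF assms _ Cs] H unfolding \<epsilon>_def c_def by simp
    qed
  qed
  ultimately show ?thesis by blast
qed


end
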